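(* Let $\mathcal Y,\mathcal X$ be finite sets, $\mathcal A$ an action set, $L:\mathcal Y\times\mathcal A\to\mathbb R$ a loss function, and $\beta,\epsilon\ge0$. Let $\{(Y_t,X_t)\}_{t}$ be a stationary process with values in $\mathcal Y\times\mathcal X$, and for each integer $\delta\ge0$ let $(\tilde Y_0,\tilde X_{-\delta})$ be a pair of random variables in $\mathcal Y\times\mathcal X$ (the training data) whose conditional distributions $P_{\tilde Y_0\mid\tilde X_{-\delta}=x}$ are defined for all $x$ with $P_{X_{t-\delta}}(x)>0$. Suppose $Y_t\overset{\epsilon}{\leftrightarrow}X_{t-\mu}\overset{\epsilon}{\leftrightarrow}X_{t-\mu-\nu}$ is an $\epsilon$-Markov chain for all integers $\mu,\nu\ge0$, and that for every integer $\delta\ge0$ $$\sum_{x\in\mathcal X}P_{X_{t-\delta}}(x)\sum_{y\in\mathcal Y}\big(P_{Y_t\mid X_{t-\delta}=x}(y)-P_{\tilde Y_0\mid\tilde X_{-\delta}=x}(y)\big)^2\le\beta^2 .$$ Then for all integers $0\le\delta_1\le\delta_2$, $$H_L\big(P_{Y_t\mid X_{t-\delta_1}};P_{\tilde Y_0\mid\tilde X_{-\delta_1}}\,\big|\,P_{X_{t-\delta_1}}\big)\le H_L\big(P_{Y_t\mid X_{t-\delta_2}};P_{\tilde Y_0\mid\tilde X_{-\delta_2}}\,\big|\,P_{X_{t-\delta_2}}\big)+O(\max\{\epsilon,\beta\}).$$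
   Context: For a distribution $P$ on $\mathcal Y$, a Bayes action $a_P$ is a minimizer of $a\mapsto\mathbb E_{Y\sim P}[L(Y,a)]$ (assumed to exist). The $L$-conditional cross entropy is $$H_L\big(P_{Y_t\mid X_{t-\delta}};P_{\tilde Y_0\mid\tilde X_{-\delta}}\,\big|\,P_{X_{t-\delta}}\big)=\sum_{x\in\mathcal X}P_{X_{t-\delta}}(x)\,\mathbb E_{Y\sim P_{Y_t\mid X_{t-\delta}=x}}\big[L\big(Y,a_{P_{\tilde Y_0\mid\tilde X_{-\delta}=x}}\big)\big].$$ The Shannon conditional mutual information is $I_{\log}(Y;Z\mid X)=D_{\log}(P_{Y,X,Z}\|P_{Y\mid X}P_{Z\mid X}P_X)$ with $D_{\log}$ the KL divergence; $Y\overset{\epsilon}{\leftrightarrow}X\overset{\epsilon}{\leftrightarrow}Z$ ($\epsilon$-Markov chain) means $I_{\log}(Y;Z\mid X)\le\epsilon^2$. $O(\cdot)$ is the Landau symbol (bounded by a constant multiple). *)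

theory Defs
  imports "HOL-Probability.Probability"
begin

definition prob_vec :: "('y::finite \<Rightarrow> real) \<Rightarrow> bool" where
  "prob_vec p \<longleftrightarrow> (\<forall>y. 0 \<le> p y) \<and> (\<Sum>y\<in>UNIV. p y) = 1"

definition exp_loss :: "('y::finite \<Rightarrow> 'a \<Rightarrow> real) \<Rightarrow> ('y \<Rightarrow> real) \<Rightarrow> 'a \<Rightarrow> real" where
  "exp_loss L p a = (\<Sum>y\<in>UNIV. p y * L y a)"

definition is_bayes_selector :: "('y::finite \<Rightarrow> 'a \<Rightarrow> real) \<Rightarrow> (('y \<Rightarrow> real) \<Rightarrow> 'a) \<Rightarrow> bool" where
  "is_bayes_selector L act \<longleftrightarrow>
     (\<forall>p. prob_vec p \<longrightarrow> (\<forall>b. exp_loss L p (act p) \<le> exp_loss L p b))"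

definition cond_cross_entropy_L ::
  "('y::finite \<Rightarrow> 'a \<Rightarrow> real) \<Rightarrow> (('y \<Rightarrow> real) \<Rightarrow> 'a) \<Rightarrow> ('x::finite \<Rightarrow> real)
    \<Rightarrow> ('x \<Rightarrow> 'y \<Rightarrow> real) \<Rightarrow> ('x \<Rightarrow> 'y \<Rightarrow> real) \<Rightarrow> real" where
  "cond_cross_entropy_L L act PX PYgX QYgX =
     (\<Sum>x\<in>UNIV. PX x * exp_loss L (PYgX x) (act (QYgX x)))"

definition pX :: "'w measure \<Rightarrow> (int \<Rightarrow> 'w \<Rightarrow> 'x) \<Rightarrow> int \<Rightarrow> 'x \<Rightarrow> real" where
  "pX M X s x = measure M {\<omega>\<in>space M. X s \<omega> = x}"

definition pYX :: "'w measure \<Rightarrow> (int \<Rightarrow> 'w \<Rightarrow> 'y) \<Rightarrow> (int \<Rightarrow> 'w \<Rightarrow> 'x) \<Rightarrow> int \<Rightarrow> int \<Rightarrow> 'y \<Rightarrow> 'x \<Rightarrow> real" where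
  "pYX M Y X t s y x = measure M {\<omega>\<in>space M. Y t \<omega> = y \<and> X s \<omega> = x}"

definition pYgX :: "'w measure \<Rightarrow> (int \<Rightarrow> 'w \<Rightarrow> 'y) \<Rightarrow> (int \<Rightarrow> 'w \<Rightarrow> 'x) \<Rightarrow> int \<Rightarrow> int \<Rightarrow> 'x \<Rightarrow> 'y \<Rightarrow> real" where
  "pYgX M Y X t s x y = pYX M Y X t s y x / pX M X s x"

text \<open>Training data (Y~_0, X~_{-delta}) as a joint pmf; its marginal and conditional.\<close>
definition train_pX :: "('y::finite \<times> 'x) pmf \<Rightarrow> 'x \<Rightarrow> real" where
  "train_pX T x = (\<Sum>y\<in>UNIV. pmf T (y, x))"

definition train_pYgX :: "('y::finite \<times> 'x) pmf \<Rightarrow> 'x \<Rightarrow> 'y \<Rightarrow> real" where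
  "train_pYgX T x y = pmf T (y, x) / train_pX T x"

text \<open>Shannon conditional mutual information I(A;C|B) = D(P_{A,B,C} || P_{A|B} P_{C|B} P_B)
  (natural logarithm), for finite-valued random variables on M.\<close>
definition cond_mutual_info ::
  "'w measure \<Rightarrow> ('w \<Rightarrow> 'a::finite) \<Rightarrow> ('w \<Rightarrow> 'b::finite) \<Rightarrow> ('w \<Rightarrow> 'c::finite) \<Rightarrow> real" where
  "cond_mutual_info M A B C =
     (\<Sum>a\<in>UNIV. \<Sum>b\<in>UNIV. \<Sum>c\<in>UNIV.
        let pabc = measure M {\<omega>\<in>space M. A \<omega> = a \<and> B \<omega> = b \<and> C \<omega> = c};
            pab = measure M {\<omega>\<in>space M. A \<omega> = a \<and> B \<omega> = b};
            pbc = measure M {\<omega>\<in>space M. B \<omega> = b \<and> C \<omega> = c};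
            pb = measure M {\<omega>\<in>space M. B \<omega> = b}
        in if pabc = 0 then 0 else pabc * ln (pabc / (pab * pbc / pb)))"

definition stationary :: "'w measure \<Rightarrow> (int \<Rightarrow> 'w \<Rightarrow> 'y) \<Rightarrow> (int \<Rightarrow> 'w \<Rightarrow> 'x) \<Rightarrow> bool" where
  "stationary M Y X \<longleftrightarrow>
    (\<forall>(n::nat) (ts::nat \<Rightarrow> int) (s::int) (v::nat \<Rightarrow> 'y \<times> 'x).
       measure M {\<omega>\<in>space M. \<forall>i<n. (Y (ts i) \<omega>, X (ts i) \<omega>) = v i}
     = measure M {\<omega>\<in>space M. \<forall>i<n. (Y (ts i + s) \<omega>, X (ts i + s) \<omega>) = v i})"

end

theory Submission
  imports Defs
begin

lemma cs_sum:
  fixes a b :: "'i \<Rightarrow> real"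
  shows "(\<Sum>i\<in>I. a i * b i) \<le> sqrt (\<Sum>i\<in>I. (a i)\<^sup>2) * sqrt (\<Sum>i\<in>I. (b i)\<^sup>2)"
proof -
  have "(\<Sum>i\<in>I. a i * b i) \<le> sqrt ((\<Sum>i\<in>I. a i * b i)\<^sup>2)" by simp
  also have "\<dots> \<le> sqrt ((\<Sum>i\<in>I. (a i)\<^sup>2) * (\<Sum>i\<in>I. (b i)\<^sup>2))"
    by (rule real_sqrt_le_mono[OF Cauchy_Schwarz_ineq_sum])
  finally show ?thesis by (simp add: real_sqrt_mult)
qed

lemma term_bound:
  fixes p r :: real
  assumes "0 \<le> p" "0 \<le> r" "p > 0 \<longrightarrow> r > 0"
  shows "(sqrt p - sqrt r)\<^sup>2 + p - r \<le> (if p = 0 then 0 else p * ln (p / r))"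
proof (cases "p = 0")
  case True then show ?thesis using assms by (simp add: power2_eq_square)
next
  case False
  then have p: "p > 0" and r: "r > 0" using assms by auto
  define u where "u = sqrt (r / p)"
  have u: "u > 0" using p r by (simp add: u_def)
  have "ln u \<le> u - 1" using u by (rule ln_le_minus_one)
  moreover have "ln (p / r) = - 2 * ln u"
    using p r by (simp add: u_def ln_sqrt ln_div)
  moreover have "p * u = sqrt p * sqrt r"
  proof -
    have "sqrt (p * r) = sqrt (p\<^sup>2 * (r / p))" using p by (simp add: power2_eq_square)
    also have "\<dots> = sqrt (p\<^sup>2) * sqrt (r / p)" by (rule real_sqrt_mult)
    also have "\<dots> = p * u" using p by (simp add: u_def)
    finally show ?thesis by (simp add: real_sqrt_mult)
  qed
  moreover have "(sqrt p - sqrt r)\<^sup>2 = p + r - 2 * (sqrt p * sqrt r)"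
    using p r by (simp add: power2_diff)
  ultimately have "(sqrt p - sqrt r)\<^sup>2 + p - r \<le> p * ln (p / r)"
  proof -
    have a: "p * ln u \<le> p * (u - 1)" using \<open>ln u \<le> u - 1\<close> p by (simp add: mult_left_mono)
    have b: "p * ln (p / r) = -2 * (p * ln u)" using \<open>ln (p / r) = - 2 * ln u\<close> by simp
    have c: "p * (u - 1) = p * u - p" by (simp add: algebra_simps)
    show ?thesis using a b c \<open>p * u = sqrt p * sqrt r\<close> \<open>(sqrt p - sqrt r)\<^sup>2 = p + r - 2 * (sqrt p * sqrt r)\<close> by linarith
  qed
  then show ?thesis using False by simp
qed

lemma pinsker_like:
  fixes p r :: "'i::finite \<Rightarrow> real"
  assumes p0: "\<forall>i. 0 \<le> p i" and r0: "\<forall>i. 0 \<le> r i" and pr: "\<forall>i. p i > 0 \<longrightarrow> r i > 0"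
    and sp: "sum p UNIV = 1" and sr: "sum r UNIV \<le> 1"
  shows "(\<Sum>i\<in>UNIV. \<bar>p i - r i\<bar>) \<le> 2 * sqrt (\<Sum>i\<in>UNIV. if p i = 0 then 0 else p i * ln (p i / r i))"
proof -
  let ?D = "\<Sum>i\<in>UNIV. if p i = 0 then 0 else p i * ln (p i / r i)"
  have "(\<Sum>i\<in>UNIV. (sqrt (p i) - sqrt (r i))\<^sup>2 + p i - r i) \<le> ?D"
    by (rule sum_mono) (use term_bound p0 r0 pr in blast)
  then have "(\<Sum>i\<in>UNIV. (sqrt (p i) - sqrt (r i))\<^sup>2) + sum p UNIV - sum r UNIV \<le> ?D"
    by (simp add: sum.distrib sum_subtractf)
  then have h1: "(\<Sum>i\<in>UNIV. (sqrt (p i) - sqrt (r i))\<^sup>2) \<le> ?D" using sp sr by linarith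
  have h2: "(\<Sum>i\<in>UNIV. (sqrt (p i) + sqrt (r i))\<^sup>2) \<le> 4"
  proof -
    have "(\<Sum>i\<in>UNIV. (sqrt (p i) + sqrt (r i))\<^sup>2) \<le> (\<Sum>i\<in>UNIV. 2 * (p i + r i))"
    proof (rule sum_mono)
      fix i
      have "(sqrt (p i) + sqrt (r i))\<^sup>2 + (sqrt (p i) - sqrt (r i))\<^sup>2 = 2 * (p i + r i)"
        using p0 r0 by (simp add: power2_sum power2_diff)
      then show "(sqrt (p i) + sqrt (r i))\<^sup>2 \<le> 2 * (p i + r i)"
        by (smt (verit) zero_le_power2)
    qed
    also have "\<dots> \<le> 4" using sp sr by (simp add: sum.distrib sum_distrib_left[symmetric])
    finally show ?thesis .
  qed
  have "(\<Sum>i\<in>UNIV. \<bar>p i - r i\<bar>) = (\<Sum>i\<in>UNIV. \<bar>sqrt (p i) - sqrt (r i)\<bar> * (sqrt (p i) + sqrt (r i)))"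
  proof (rule sum.cong)
    fix i
    have "p i - r i = (sqrt (p i) - sqrt (r i)) * (sqrt (p i) + sqrt (r i))"
      using p0 r0 by (simp add: algebra_simps)
    moreover have "0 \<le> sqrt (p i) + sqrt (r i)" using p0 r0 by simp
    ultimately show "\<bar>p i - r i\<bar> = \<bar>sqrt (p i) - sqrt (r i)\<bar> * (sqrt (p i) + sqrt (r i))"
      by (simp add: abs_mult)
  qed simp
  also have "\<dots> \<le> sqrt (\<Sum>i\<in>UNIV. \<bar>sqrt (p i) - sqrt (r i)\<bar>\<^sup>2) * sqrt (\<Sum>i\<in>UNIV. (sqrt (p i) + sqrt (r i))\<^sup>2)"
    by (rule cs_sum)
  also have "\<dots> \<le> sqrt ?D * 2"
  proof (rule mult_mono)
    show "sqrt (\<Sum>i\<in>UNIV. \<bar>sqrt (p i) - sqrt (r i)\<bar>\<^sup>2) \<le> sqrt ?D" using h1 by simp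
    show "sqrt (\<Sum>i\<in>UNIV. (sqrt (p i) + sqrt (r i))\<^sup>2) \<le> 2"
      using h2 real_sqrt_le_mono[OF h2] by (simp add: real_sqrt_four)
    have "0 \<le> (\<Sum>i\<in>UNIV. (sqrt (p i) - sqrt (r i))\<^sup>2)" by (rule sum_nonneg) simp
    then show "0 \<le> sqrt ?D" using h1 by simp
  qed (simp_all add: sum_nonneg)
  finally show ?thesis by simp
qed

lemma exp_loss_diff:
  assumes "\<forall>y a. \<bar>L y a\<bar> \<le> B"
  shows "\<bar>exp_loss L P a - exp_loss L Q a\<bar> \<le> B * (\<Sum>y\<in>UNIV. \<bar>P y - Q y\<bar>)"
proof -
  have "\<bar>exp_loss L P a - exp_loss L Q a\<bar> = \<bar>\<Sum>y\<in>UNIV. (P y - Q y) * L y a\<bar>"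
    by (simp add: exp_loss_def sum_subtractf left_diff_distrib)
  also have "\<dots> \<le> (\<Sum>y\<in>UNIV. \<bar>(P y - Q y) * L y a\<bar>)" by (rule sum_abs)
  also have "\<dots> \<le> (\<Sum>y\<in>UNIV. \<bar>P y - Q y\<bar> * B)"
    by (rule sum_mono) (simp add: abs_mult assms mult_left_mono)
  finally show ?thesis by (simp add: sum_distrib_left mult.commute)
qed

lemma stepA:
  assumes B: "\<forall>y a. \<bar>L y a\<bar> \<le> B" and Q: "prob_vec Q" and bay: "is_bayes_selector L act"
  shows "exp_loss L P (act Q) \<le> exp_loss L P b + 2 * B * (\<Sum>y\<in>UNIV. \<bar>P y - Q y\<bar>)"
proof -
  have 1: "exp_loss L Q (act Q) \<le> exp_loss L Q b" using Q bay by (simp add: is_bayes_selector_def)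
  show ?thesis using exp_loss_diff[OF B, of P "act Q" Q] exp_loss_diff[OF B, of P b Q] 1 by linarith
qed

lemma beta_bound:
  fixes m :: "'x::finite \<Rightarrow> real" and d :: "'x \<Rightarrow> 'y::finite \<Rightarrow> real"
  assumes m0: "\<forall>b. 0 \<le> m b" and tot: "(\<Sum>b\<in>UNIV. m b) = 1"
    and bet: "(\<Sum>b\<in>UNIV. m b * (\<Sum>y\<in>UNIV. (d b y)\<^sup>2)) \<le> \<beta>\<^sup>2" and b0: "0 \<le> \<beta>"
  shows "(\<Sum>b\<in>UNIV. m b * (\<Sum>y\<in>UNIV. \<bar>d b y\<bar>)) \<le> sqrt (real CARD('y)) * \<beta>"
proof -
  let ?S = "\<lambda>b. (\<Sum>y\<in>UNIV. (d b y)\<^sup>2)"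
  have "(\<Sum>b\<in>UNIV. m b * (\<Sum>y\<in>UNIV. \<bar>d b y\<bar>)) \<le> (\<Sum>b\<in>UNIV. m b * (sqrt (real CARD('y)) * sqrt (?S b)))"
  proof (rule sum_mono)
    fix b
    have "(\<Sum>y\<in>UNIV. \<bar>d b y\<bar>) \<le> sqrt (real CARD('y)) * sqrt (?S b)"
      using cs_sum[of "\<lambda>y. 1" "\<lambda>y. \<bar>d b y\<bar>" UNIV] by simp
    then show "m b * (\<Sum>y\<in>UNIV. \<bar>d b y\<bar>) \<le> m b * (sqrt (real CARD('y)) * sqrt (?S b))"
      using m0 by (simp add: mult_left_mono)
  qed
  also have "\<dots> = (\<Sum>b\<in>UNIV. sqrt (real CARD('y)) * (sqrt (m b) * sqrt (m b * ?S b)))"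
  proof -
    have pt: "mm * (c * sqrt s) = c * (sqrt mm * sqrt (mm * s))" if "0 \<le> mm" for mm c s :: real
    proof -
      have "sqrt mm * sqrt (mm * s) = (sqrt mm * sqrt mm) * sqrt s" by (simp add: real_sqrt_mult)
      also have "\<dots> = mm * sqrt s" using that by simp
      finally show ?thesis by simp
    qed
    show ?thesis by (rule sum.cong[OF refl]) (rule pt, simp add: m0)
  qed
  also have "\<dots> = sqrt (real CARD('y)) * (\<Sum>b\<in>UNIV. sqrt (m b) * sqrt (m b * ?S b))"
    by (rule sum_distrib_left[symmetric])
  also have "\<dots> \<le> sqrt (real CARD('y)) * (sqrt (\<Sum>b\<in>UNIV. (sqrt (m b))\<^sup>2) * sqrt (\<Sum>b\<in>UNIV. (sqrt (m b * ?S b))\<^sup>2))"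
    by (rule mult_left_mono[OF cs_sum]) simp
  also have "\<dots> = sqrt (real CARD('y)) * sqrt (\<Sum>b\<in>UNIV. m b * ?S b)"
    using m0 tot by (simp add: sum_nonneg)
  also have "\<dots> \<le> sqrt (real CARD('y)) * \<beta>"
    using real_sqrt_le_mono[OF bet] b0 by (simp add: mult_left_mono)
  finally show ?thesis .
qed

lemma swap3:
  fixes f :: "'b \<Rightarrow> 'c \<Rightarrow> 'y \<Rightarrow> real"
  shows "(\<Sum>b\<in>UNIV. \<Sum>c\<in>UNIV. \<Sum>y\<in>UNIV. f b c y) = (\<Sum>y\<in>UNIV. \<Sum>b\<in>UNIV. \<Sum>c\<in>UNIV. f b c y)"
proof -
  have "(\<Sum>b\<in>UNIV. \<Sum>c\<in>UNIV. \<Sum>y\<in>UNIV. f b c y) = (\<Sum>b\<in>UNIV. \<Sum>y\<in>UNIV. \<Sum>c\<in>UNIV. f b c y)"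
    by (rule sum.cong[OF refl]) (rule sum.swap)
  also have "\<dots> = (\<Sum>y\<in>UNIV. \<Sum>b\<in>UNIV. \<Sum>c\<in>UNIV. f b c y)" by (rule sum.swap)
  finally show ?thesis .
qed

lemma nest_prod:
  fixes f :: "'y::finite \<Rightarrow> 'b::finite \<Rightarrow> 'c::finite \<Rightarrow> real"
  shows "(\<Sum>y\<in>UNIV. \<Sum>b\<in>UNIV. \<Sum>c\<in>UNIV. f y b c) = (\<Sum>z\<in>UNIV. f (fst z) (fst (snd z)) (snd (snd z)))"
  by (simp add: sum.cartesian_product split_beta flip: UNIV_Times_UNIV)

lemma core:
  fixes L :: "'y::finite \<Rightarrow> 'a \<Rightarrow> real" and p :: "'y \<Rightarrow> 'x::finite \<Rightarrow> 'x \<Rightarrow> real"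
    and J1 J2 :: "'y \<Rightarrow> 'x \<Rightarrow> real" and pbc :: "'x \<Rightarrow> 'x \<Rightarrow> real" and m1 m2 :: "'x \<Rightarrow> real"
    and Q1 Q2 :: "'x \<Rightarrow> 'y \<Rightarrow> real"
  assumes Bd: "\<forall>y a. \<bar>L y a\<bar> \<le> B"
    and bay: "is_bayes_selector L act"
    and p0: "\<forall>y b c. 0 \<le> p y b c"
    and J1: "\<forall>y b. J1 y b = (\<Sum>c\<in>UNIV. p y b c)"
    and J2: "\<forall>y c. J2 y c = (\<Sum>b\<in>UNIV. p y b c)"
    and pbc: "\<forall>b c. pbc b c = (\<Sum>y\<in>UNIV. p y b c)"
    and m1: "\<forall>b. m1 b = (\<Sum>y\<in>UNIV. J1 y b)"
    and m2: "\<forall>c. m2 c = (\<Sum>y\<in>UNIV. J2 y c)"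
    and tot: "(\<Sum>b\<in>UNIV. m1 b) = 1"
    and Q1: "\<forall>b. m1 b > 0 \<longrightarrow> prob_vec (Q1 b)"
    and Imi: "(\<Sum>y\<in>UNIV. \<Sum>b\<in>UNIV. \<Sum>c\<in>UNIV. if p y b c = 0 then 0
                else p y b c * ln (p y b c / (J1 y b * pbc b c / m1 b))) \<le> \<epsilon>\<^sup>2"
    and bet: "(\<Sum>b\<in>UNIV. m1 b * (\<Sum>y\<in>UNIV. (J1 y b / m1 b - Q1 b y)\<^sup>2)) \<le> \<beta>\<^sup>2"
    and e0: "0 \<le> \<epsilon>" and b0: "0 \<le> \<beta>"
  shows "(\<Sum>b\<in>UNIV. m1 b * exp_loss L (\<lambda>y. J1 y b / m1 b) (act (Q1 b)))
     \<le> (\<Sum>c\<in>UNIV. m2 c * exp_loss L (\<lambda>y. J2 y c / m2 c) (act (Q2 c)))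
        + (2 * B + 2 * B * sqrt (real CARD('y))) * max \<epsilon> \<beta>"
proof -
  have B0: "0 \<le> B" using Bd by (meson abs_ge_zero order_trans)
  have J1_0: "0 \<le> J1 y b" for y b using J1 p0 by (simp add: sum_nonneg)
  have J2_0: "0 \<le> J2 y b" for y b using J2 p0 by (simp add: sum_nonneg)
  have pbc_0: "0 \<le> pbc b c" for b c using pbc p0 by (simp add: sum_nonneg)
  have m1_0: "0 \<le> m1 b" for b using m1 J1_0 by (simp add: sum_nonneg)
  have J1_le: "J1 y b \<le> m1 b" for y b
    using m1 member_le_sum[of y UNIV "\<lambda>y. J1 y b"] J1_0 by simp
  have J2_le: "J2 y b \<le> m2 b" for y b
    using m2 member_le_sum[of y UNIV "\<lambda>y. J2 y b"] J2_0 by simp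
  have p_le_J1: "p y b c \<le> J1 y b" for y b c
    using J1 member_le_sum[of c UNIV "\<lambda>c. p y b c"] p0 by simp
  have p_le_pbc: "p y b c \<le> pbc b c" for y b c
    using pbc member_le_sum[of y UNIV "\<lambda>y. p y b c"] p0 by simp
  have pbc_sum: "(\<Sum>c\<in>UNIV. pbc b c) = m1 b" for b
  proof -
    have "(\<Sum>c\<in>UNIV. pbc b c) = (\<Sum>c\<in>UNIV. \<Sum>y\<in>UNIV. p y b c)" using pbc by simp
    also have "\<dots> = (\<Sum>y\<in>UNIV. \<Sum>c\<in>UNIV. p y b c)" by (rule sum.swap)
    finally show ?thesis using J1 m1 by simp
  qed
  have K1: "m1 b * exp_loss L (\<lambda>y. J1 y b / m1 b) a = (\<Sum>y\<in>UNIV. J1 y b * L y a)" for b a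
  proof (cases "m1 b = 0")
    case True
    then have "J1 y b = 0" for y using J1_0[of y b] J1_le[of y b] by simp
    then show ?thesis using True by simp
  next
    case False
    then show ?thesis by (simp add: exp_loss_def sum_distrib_left)
  qed
  have K2: "m2 c * exp_loss L (\<lambda>y. J2 y c / m2 c) a = (\<Sum>y\<in>UNIV. J2 y c * L y a)" for c a
  proof (cases "m2 c = 0")
    case True
    then have "J2 y c = 0" for y using J2_0[of y c] J2_le[of y c] by simp
    then show ?thesis using True by simp
  next
    case False
    then show ?thesis by (simp add: exp_loss_def sum_distrib_left)
  qed
  define g where "g c = act (Q2 c)" for c
  define r where "r y b c = J1 y b * pbc b c / m1 b" for y b c
  define e where "e b = 2 * B * (m1 b * (\<Sum>y\<in>UNIV. \<bar>J1 y b / m1 b - Q1 b y\<bar>))" for b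
  have stepb: "(\<Sum>y\<in>UNIV. J1 y b * L y (act (Q1 b))) \<le> (\<Sum>c\<in>UNIV. \<Sum>y\<in>UNIV. r y b c * L y (g c)) + e b" for b
  proof (cases "m1 b = 0")
    case True
    then have "J1 y b = 0" for y using J1_0[of y b] J1_le[of y b] by simp
    then show ?thesis using True by (simp add: r_def e_def)
  next
    case False
    then have mpos: "m1 b > 0" using m1_0[of b] by simp
    have A: "(\<Sum>y\<in>UNIV. J1 y b * L y (act (Q1 b))) \<le> (\<Sum>y\<in>UNIV. J1 y b * L y (g c)) + e b" for c
    proof -
      have "exp_loss L (\<lambda>y. J1 y b / m1 b) (act (Q1 b)) \<le> exp_loss L (\<lambda>y. J1 y b / m1 b) (g c)
             + 2 * B * (\<Sum>y\<in>UNIV. \<bar>J1 y b / m1 b - Q1 b y\<bar>)"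
        using stepA[OF Bd _ bay] Q1 mpos by blast
      then have "m1 b * exp_loss L (\<lambda>y. J1 y b / m1 b) (act (Q1 b)) \<le> m1 b * (exp_loss L (\<lambda>y. J1 y b / m1 b) (g c)
             + 2 * B * (\<Sum>y\<in>UNIV. \<bar>J1 y b / m1 b - Q1 b y\<bar>))"
        using mpos by (simp add: mult_left_mono)
      then have "m1 b * exp_loss L (\<lambda>y. J1 y b / m1 b) (act (Q1 b)) \<le> m1 b * exp_loss L (\<lambda>y. J1 y b / m1 b) (g c)
             + e b" unfolding e_def by (simp add: algebra_simps)
      then show ?thesis unfolding K1 .
    qed
    have w: "(\<Sum>c\<in>UNIV. pbc b c / m1 b) = 1"
      using pbc_sum[of b] mpos by (simp add: sum_divide_distrib[symmetric])
    have "(\<Sum>y\<in>UNIV. J1 y b * L y (act (Q1 b))) = (\<Sum>c\<in>UNIV. pbc b c / m1 b * (\<Sum>y\<in>UNIV. J1 y b * L y (act (Q1 b))))"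
      unfolding sum_distrib_right[symmetric] w by simp
    also have "\<dots> \<le> (\<Sum>c\<in>UNIV. pbc b c / m1 b * ((\<Sum>y\<in>UNIV. J1 y b * L y (g c)) + e b))"
      by (rule sum_mono, rule mult_left_mono[OF A]) (use pbc_0 m1_0 in simp)
    also have "\<dots> = (\<Sum>c\<in>UNIV. pbc b c / m1 b * (\<Sum>y\<in>UNIV. J1 y b * L y (g c))) + e b"
      by (simp only: distrib_left sum.distrib sum_distrib_right[symmetric] w mult_1_left)
    also have "(\<Sum>c\<in>UNIV. pbc b c / m1 b * (\<Sum>y\<in>UNIV. J1 y b * L y (g c))) = (\<Sum>c\<in>UNIV. \<Sum>y\<in>UNIV. r y b c * L y (g c))"
      by (simp add: sum_distrib_left r_def mult_ac)
    finally show ?thesis .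
  qed
  define P where "P z = p (fst z) (fst (snd z)) (snd (snd z))" for z :: "'y \<times> 'x \<times> 'x"
  define R where "R z = r (fst z) (fst (snd z)) (snd (snd z))" for z :: "'y \<times> 'x \<times> 'x"
  have sumP: "sum P UNIV = 1"
  proof -
    have "sum P UNIV = (\<Sum>y\<in>UNIV. \<Sum>b\<in>UNIV. \<Sum>c\<in>UNIV. p y b c)" unfolding P_def by (rule nest_prod[symmetric])
    also have "\<dots> = (\<Sum>b\<in>UNIV. \<Sum>y\<in>UNIV. \<Sum>c\<in>UNIV. p y b c)" by (rule sum.swap)
    also have "\<dots> = (\<Sum>b\<in>UNIV. m1 b)" using J1 m1 by simp
    finally show ?thesis using tot by simp
  qed
  have sumR: "sum R UNIV \<le> 1"
  proof -
    have "sum R UNIV = (\<Sum>y\<in>UNIV. \<Sum>b\<in>UNIV. \<Sum>c\<in>UNIV. r y b c)" unfolding R_def by (rule nest_prod[symmetric])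
    also have "\<dots> = (\<Sum>b\<in>UNIV. \<Sum>y\<in>UNIV. \<Sum>c\<in>UNIV. r y b c)" by (rule sum.swap)
    also have "\<dots> = (\<Sum>b\<in>UNIV. m1 b)"
    proof (rule sum.cong[OF refl])
      fix b
      have "(\<Sum>y\<in>UNIV. \<Sum>c\<in>UNIV. r y b c) = (\<Sum>y\<in>UNIV. J1 y b) * (\<Sum>c\<in>UNIV. pbc b c) / m1 b"
        by (simp only: r_def sum_divide_distrib[symmetric] sum_product)
      also have "\<dots> = m1 b" using m1 pbc_sum[of b] by (cases "m1 b = 0") auto
      finally show "(\<Sum>y\<in>UNIV. \<Sum>c\<in>UNIV. r y b c) = m1 b" .
    qed
    finally show ?thesis using tot by simp
  qed
  have Pins: "(\<Sum>z\<in>UNIV. \<bar>P z - R z\<bar>) \<le> 2 * \<epsilon>"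
  proof -
    have "(\<Sum>z\<in>UNIV. \<bar>P z - R z\<bar>) \<le> 2 * sqrt (\<Sum>z\<in>UNIV. if P z = 0 then 0 else P z * ln (P z / R z))"
    proof (rule pinsker_like)
      show "\<forall>i. 0 \<le> P i" using p0 by (simp add: P_def)
      show "\<forall>i. 0 \<le> R i" using J1_0 pbc_0 m1_0 by (simp add: R_def r_def)
      show "\<forall>i. 0 < P i \<longrightarrow> 0 < R i"
      proof (intro allI impI)
        fix i assume "0 < P i"
        then have "0 < J1 (fst i) (fst (snd i)) " "0 < pbc (fst (snd i)) (snd (snd i))"
          using p_le_J1 p_le_pbc unfolding P_def by (meson less_le_trans)+
        moreover have "0 < m1 (fst (snd i))" using calculation(1) J1_le by (meson less_le_trans)
        ultimately show "0 < R i" by (simp add: R_def r_def)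
      qed
    qed (use sumP sumR in auto)
    also have "(\<Sum>z\<in>UNIV. if P z = 0 then 0 else P z * ln (P z / R z)) \<le> \<epsilon>\<^sup>2"
      using Imi unfolding P_def R_def r_def by (simp add: nest_prod)
    then have "sqrt (\<Sum>z\<in>UNIV. if P z = 0 then 0 else P z * ln (P z / R z)) \<le> \<epsilon>"
      using e0 real_sqrt_le_mono by fastforce
    finally show ?thesis by simp
  qed
  have diff: "(\<Sum>b\<in>UNIV. \<Sum>c\<in>UNIV. \<Sum>y\<in>UNIV. r y b c * L y (g c))
       \<le> (\<Sum>b\<in>UNIV. \<Sum>c\<in>UNIV. \<Sum>y\<in>UNIV. p y b c * L y (g c)) + 2 * B * \<epsilon>"
  proof -
    have "(\<Sum>b\<in>UNIV. \<Sum>c\<in>UNIV. \<Sum>y\<in>UNIV. r y b c * L y (g c)) - (\<Sum>b\<in>UNIV. \<Sum>c\<in>UNIV. \<Sum>y\<in>UNIV. p y b c * L y (g c))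
        = (\<Sum>b\<in>UNIV. \<Sum>c\<in>UNIV. \<Sum>y\<in>UNIV. (r y b c - p y b c) * L y (g c))"
      by (simp add: sum_subtractf left_diff_distrib)
    also have "\<dots> \<le> (\<Sum>b\<in>UNIV. \<Sum>c\<in>UNIV. \<Sum>y\<in>UNIV. B * \<bar>p y b c - r y b c\<bar>)"
    proof (intro sum_mono)
      fix b c y
      have "(r y b c - p y b c) * L y (g c) \<le> \<bar>r y b c - p y b c\<bar> * \<bar>L y (g c)\<bar>"
        by (metis abs_ge_self abs_mult)
      also have "\<dots> \<le> \<bar>r y b c - p y b c\<bar> * B" using Bd by (simp add: mult_left_mono)
      finally show "(r y b c - p y b c) * L y (g c) \<le> B * \<bar>p y b c - r y b c\<bar>" by (simp add: abs_minus_commute mult.commute)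
    qed
    also have "\<dots> = B * (\<Sum>z\<in>UNIV. \<bar>P z - R z\<bar>)"
      by (subst swap3, subst nest_prod) (simp add: P_def R_def sum_distrib_left)
    also have "\<dots> \<le> B * (2 * \<epsilon>)" using Pins B0 by (simp add: mult_left_mono)
    finally show ?thesis by simp
  qed
  have H2: "(\<Sum>b\<in>UNIV. \<Sum>c\<in>UNIV. \<Sum>y\<in>UNIV. p y b c * L y (g c))
       = (\<Sum>c\<in>UNIV. m2 c * exp_loss L (\<lambda>y. J2 y c / m2 c) (act (Q2 c)))"
  proof -
    have "(\<Sum>b\<in>UNIV. \<Sum>c\<in>UNIV. \<Sum>y\<in>UNIV. p y b c * L y (g c)) = (\<Sum>c\<in>UNIV. \<Sum>b\<in>UNIV. \<Sum>y\<in>UNIV. p y b c * L y (g c))"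
      by (rule sum.swap)
    also have "\<dots> = (\<Sum>c\<in>UNIV. \<Sum>y\<in>UNIV. \<Sum>b\<in>UNIV. p y b c * L y (g c))"
      by (rule sum.cong[OF refl]) (rule sum.swap)
    also have "\<dots> = (\<Sum>c\<in>UNIV. \<Sum>y\<in>UNIV. J2 y c * L y (g c))"
      using J2 by (simp add: sum_distrib_right)
    finally show ?thesis unfolding K2 g_def .
  qed
  have ebound: "(\<Sum>b\<in>UNIV. e b) \<le> 2 * B * (sqrt (real CARD('y)) * \<beta>)"
  proof -
    have "(\<Sum>b\<in>UNIV. m1 b * (\<Sum>y\<in>UNIV. \<bar>J1 y b / m1 b - Q1 b y\<bar>)) \<le> sqrt (real CARD('y)) * \<beta>"
      by (rule beta_bound[of m1 "\<lambda>b y. J1 y b / m1 b - Q1 b y"]) (use m1_0 tot bet b0 in auto)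
    then show ?thesis unfolding e_def sum_distrib_left[symmetric] using B0 by (simp add: mult_left_mono)
  qed
  have "(\<Sum>b\<in>UNIV. m1 b * exp_loss L (\<lambda>y. J1 y b / m1 b) (act (Q1 b)))
      = (\<Sum>b\<in>UNIV. \<Sum>y\<in>UNIV. J1 y b * L y (act (Q1 b)))" unfolding K1 ..
  also have "\<dots> \<le> (\<Sum>b\<in>UNIV. (\<Sum>c\<in>UNIV. \<Sum>y\<in>UNIV. r y b c * L y (g c)) + e b)"
    by (rule sum_mono) (rule stepb)
  also have "\<dots> = (\<Sum>b\<in>UNIV. \<Sum>c\<in>UNIV. \<Sum>y\<in>UNIV. r y b c * L y (g c)) + (\<Sum>b\<in>UNIV. e b)"
    by (rule sum.distrib)
  finally have "(\<Sum>b\<in>UNIV. m1 b * exp_loss L (\<lambda>y. J1 y b / m1 b) (act (Q1 b)))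
     \<le> (\<Sum>c\<in>UNIV. m2 c * exp_loss L (\<lambda>y. J2 y c / m2 c) (act (Q2 c))) + 2 * B * \<epsilon> + 2 * B * (sqrt (real CARD('y)) * \<beta>)"
    using diff H2 ebound by linarith
  moreover have "2 * B * \<epsilon> \<le> 2 * B * max \<epsilon> \<beta>" using B0 by (simp add: mult_left_mono)
  moreover have "2 * B * (sqrt (real CARD('y)) * \<beta>) \<le> 2 * B * sqrt (real CARD('y)) * max \<epsilon> \<beta>"
    using B0 by (simp add: mult_left_mono)
  ultimately show ?thesis by (simp add: distrib_right)
qed

lemma ev_eq:
  assumes "f \<in> measurable M (count_space UNIV)"
  shows "{\<omega>\<in>space M. f \<omega> = c} \<in> sets M"
proof -
  have "{\<omega>\<in>space M. f \<omega> = c} = f -` {c} \<inter> space M" by auto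
  then show ?thesis using measurable_sets[OF assms, of "{c}"] by simp
qed

lemma ev_conj:
  assumes "{\<omega>\<in>space M. P \<omega>} \<in> sets M" "{\<omega>\<in>space M. Q \<omega>} \<in> sets M"
  shows "{\<omega>\<in>space M. P \<omega> \<and> Q \<omega>} \<in> sets M"
proof -
  have "{\<omega>\<in>space M. P \<omega> \<and> Q \<omega>} = {\<omega>\<in>space M. P \<omega>} \<inter> {\<omega>\<in>space M. Q \<omega>}" by auto
  then show ?thesis using assms by simp
qed

lemma meas_split:
  fixes f :: "'w \<Rightarrow> 'c::finite"
  assumes M: "prob_space M" and PS: "{\<omega>\<in>space M. P \<omega>} \<in> sets M"
    and f: "f \<in> measurable M (count_space UNIV)"
  shows "measure M {\<omega>\<in>space M. P \<omega>} = (\<Sum>c\<in>UNIV. measure M {\<omega>\<in>space M. P \<omega> \<and> f \<omega> = c})"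
proof -
  interpret prob_space M by (rule M)
  have S: "{\<omega>\<in>space M. P \<omega> \<and> f \<omega> = c} \<in> sets M" for c
    by (rule ev_conj[OF PS ev_eq[OF f]])
  have eq: "{\<omega>\<in>space M. P \<omega>} = (\<Union>c\<in>UNIV. {\<omega>\<in>space M. P \<omega> \<and> f \<omega> = c})" by auto
  show ?thesis unfolding eq
    by (rule measure_finite_Union) (use S in \<open>auto simp: disjoint_family_on_def emeasure_finite\<close>)
qed

lemma train_prob_vec:
  assumes "train_pX T x > 0"
  shows "prob_vec (train_pYgX T x)"
proof -
  have "(\<Sum>y\<in>UNIV. train_pYgX T x y) = train_pX T x / train_pX T x"
    unfolding train_pYgX_def sum_divide_distrib[symmetric] train_pX_def ..
  then show ?thesis using assms unfolding prob_vec_def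
    by (auto simp: train_pYgX_def train_pX_def intro!: divide_nonneg_pos)
qed

theorem theorem3:
  fixes L :: "'y::finite \<Rightarrow> 'a \<Rightarrow> real"
  assumes "\<exists>B. \<forall>y a. \<bar>L y a\<bar> \<le> B"
  shows "\<exists>C. \<forall>(M::'w measure) (Y::int \<Rightarrow> 'w \<Rightarrow> 'y) (X::int \<Rightarrow> 'w \<Rightarrow> 'x::finite)
            (T::nat \<Rightarrow> ('y \<times> 'x) pmf) (act::('y \<Rightarrow> real) \<Rightarrow> 'a)
            (\<beta>::real) (\<epsilon>::real) (t::int) (\<delta>\<^sub>1::nat) (\<delta>\<^sub>2::nat).
     prob_space M \<and>
     (\<forall>s. Y s \<in> measurable M (count_space UNIV) \<and> X s \<in> measurable M (count_space UNIV)) \<and>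
     stationary M Y X \<and>
     is_bayes_selector L act \<and>
     0 \<le> \<beta> \<and> 0 \<le> \<epsilon> \<and>
     (\<forall>\<mu> \<nu>::nat. cond_mutual_info M (Y t) (X (t - int \<mu>)) (X (t - int \<mu> - int \<nu>)) \<le> \<epsilon>\<^sup>2) \<and>
     (\<forall>(\<delta>::nat) x. pX M X (t - int \<delta>) x > 0 \<longrightarrow> train_pX (T \<delta>) x > 0) \<and>
     (\<forall>\<delta>::nat. (\<Sum>x\<in>UNIV. pX M X (t - int \<delta>) x *
                 (\<Sum>y\<in>UNIV. (pYgX M Y X t (t - int \<delta>) x y - train_pYgX (T \<delta>) x y)\<^sup>2)) \<le> \<beta>\<^sup>2) \<and>
     \<delta>\<^sub>1 \<le> \<delta>\<^sub>2
     \<longrightarrow>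
     cond_cross_entropy_L L act (pX M X (t - int \<delta>\<^sub>1)) (pYgX M Y X t (t - int \<delta>\<^sub>1)) (train_pYgX (T \<delta>\<^sub>1))
       \<le> cond_cross_entropy_L L act (pX M X (t - int \<delta>\<^sub>2)) (pYgX M Y X t (t - int \<delta>\<^sub>2)) (train_pYgX (T \<delta>\<^sub>2))
         + C * max \<epsilon> \<beta>"
proof -
  obtain B where Bd: "\<forall>y a. \<bar>L y a\<bar> \<le> B" using assms by blast
  show ?thesis
  proof (rule exI[of _ "2 * B + 2 * B * sqrt (real CARD('y))"], intro allI impI)
    fix M :: "'w measure" and Y :: "int \<Rightarrow> 'w \<Rightarrow> 'y" and X :: "int \<Rightarrow> 'w \<Rightarrow> 'x"
      and T :: "nat \<Rightarrow> ('y \<times> 'x) pmf" and act :: "('y \<Rightarrow> real) \<Rightarrow> 'a"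
      and \<beta> \<epsilon> :: real and t :: int and \<delta>\<^sub>1 \<delta>\<^sub>2 :: nat
    assume H: "prob_space M \<and>
     (\<forall>s. Y s \<in> measurable M (count_space UNIV) \<and> X s \<in> measurable M (count_space UNIV)) \<and>
     stationary M Y X \<and>
     is_bayes_selector L act \<and>
     0 \<le> \<beta> \<and> 0 \<le> \<epsilon> \<and>
     (\<forall>\<mu> \<nu>::nat. cond_mutual_info M (Y t) (X (t - int \<mu>)) (X (t - int \<mu> - int \<nu>)) \<le> \<epsilon>\<^sup>2) \<and>
     (\<forall>(\<delta>::nat) x. pX M X (t - int \<delta>) x > 0 \<longrightarrow> train_pX (T \<delta>) x > 0) \<and>
     (\<forall>\<delta>::nat. (\<Sum>x\<in>UNIV. pX M X (t - int \<delta>) x *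
                 (\<Sum>y\<in>UNIV. (pYgX M Y X t (t - int \<delta>) x y - train_pYgX (T \<delta>) x y)\<^sup>2)) \<le> \<beta>\<^sup>2) \<and>
     \<delta>\<^sub>1 \<le> \<delta>\<^sub>2"
    from H have M: "prob_space M" by (elim conjE)
    from H have YXm: "\<forall>s. Y s \<in> measurable M (count_space UNIV) \<and> X s \<in> measurable M (count_space UNIV)" by (elim conjE)
    then have Ym: "\<And>s. Y s \<in> measurable M (count_space UNIV)"
      and Xm: "\<And>s. X s \<in> measurable M (count_space UNIV)" by auto
    from H have bay: "is_bayes_selector L act" by (elim conjE)
    from H have b0: "0 \<le> \<beta>" by (elim conjE)
    from H have e0: "0 \<le> \<epsilon>" by (elim conjE)
    from H have MI: "\<forall>\<mu> \<nu>::nat. cond_mutual_info M (Y t) (X (t - int \<mu>)) (X (t - int \<mu> - int \<nu>)) \<le> \<epsilon>\<^sup>2" by (elim conjE)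
    from H have TP: "\<forall>(\<delta>::nat) x. pX M X (t - int \<delta>) x > 0 \<longrightarrow> train_pX (T \<delta>) x > 0" by (elim conjE)
    from H have BE: "\<forall>\<delta>::nat. (\<Sum>x\<in>UNIV. pX M X (t - int \<delta>) x *
                 (\<Sum>y\<in>UNIV. (pYgX M Y X t (t - int \<delta>) x y - train_pYgX (T \<delta>) x y)\<^sup>2)) \<le> \<beta>\<^sup>2" by (elim conjE)
    from H have dd: "\<delta>\<^sub>1 \<le> \<delta>\<^sub>2" by (elim conjE)
    interpret prob_space M by (rule M)
    define s1 where "s1 = t - int \<delta>\<^sub>1"
    define s2 where "s2 = t - int \<delta>\<^sub>2"
    have s2': "t - int \<delta>\<^sub>1 - int (\<delta>\<^sub>2 - \<delta>\<^sub>1) = s2" using dd by (simp add: s2_def of_nat_diff)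
    define p where "p y b c = measure M {\<omega>\<in>space M. Y t \<omega> = y \<and> X s1 \<omega> = b \<and> X s2 \<omega> = c}" for y b c
    define pbc where "pbc b c = measure M {\<omega>\<in>space M. X s1 \<omega> = b \<and> X s2 \<omega> = c}" for b c
    have eY: "{\<omega>\<in>space M. Y s \<omega> = y} \<in> sets M" for s y by (rule ev_eq[OF Ym])
    have eX: "{\<omega>\<in>space M. X s \<omega> = y} \<in> sets M" for s y by (rule ev_eq[OF Xm])
    have J1: "\<forall>y b. pYX M Y X t s1 y b = (\<Sum>c\<in>UNIV. p y b c)"
    proof (intro allI)
      fix y b
      show "pYX M Y X t s1 y b = (\<Sum>c\<in>UNIV. p y b c)"
        unfolding pYX_def p_def
        using meas_split[OF M ev_conj[OF eY eX] Xm[of s2], of t y s1 b] by (simp add: conj_ac)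
    qed
    have J2: "\<forall>y c. pYX M Y X t s2 y c = (\<Sum>b\<in>UNIV. p y b c)"
    proof (intro allI)
      fix y c
      show "pYX M Y X t s2 y c = (\<Sum>b\<in>UNIV. p y b c)"
        unfolding pYX_def p_def
        using meas_split[OF M ev_conj[OF eY eX] Xm[of s1], of t y s2 c] by (simp add: conj_ac)
    qed
    have PB: "\<forall>b c. pbc b c = (\<Sum>y\<in>UNIV. p y b c)"
    proof (intro allI)
      fix b c
      show "pbc b c = (\<Sum>y\<in>UNIV. p y b c)"
        unfolding pbc_def p_def
        using meas_split[OF M ev_conj[OF eX eX] Ym[of t], of s1 b s2 c] by (simp add: conj_ac)
    qed
    have m1: "\<forall>b. pX M X s b = (\<Sum>y\<in>UNIV. pYX M Y X t s y b)" for s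
    proof (intro allI)
      fix b
      show "pX M X s b = (\<Sum>y\<in>UNIV. pYX M Y X t s y b)"
        unfolding pX_def pYX_def
        using meas_split[OF M eX Ym[of t], of s b] by (simp add: conj_ac)
    qed
    have tot: "(\<Sum>b\<in>UNIV. pX M X s1 b) = 1"
    proof -
      have "1 = measure M {\<omega>\<in>space M. True}" by (simp add: prob_space)
      also have "\<dots> = (\<Sum>b\<in>UNIV. measure M {\<omega>\<in>space M. True \<and> X s1 \<omega> = b})"
        by (rule meas_split[OF M _ Xm]) simp
      finally show ?thesis by (simp add: pX_def)
    qed
    have Q1: "\<forall>b. pX M X s1 b > 0 \<longrightarrow> prob_vec (train_pYgX (T \<delta>\<^sub>1) b)"
      using TP unfolding s1_def by (simp add: train_prob_vec)
    have Imi: "(\<Sum>y\<in>UNIV. \<Sum>b\<in>UNIV. \<Sum>c\<in>UNIV. if p y b c = 0 then 0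
                else p y b c * ln (p y b c / (pYX M Y X t s1 y b * pbc b c / pX M X s1 b))) \<le> \<epsilon>\<^sup>2"
      using MI[rule_format, of \<delta>\<^sub>1 "\<delta>\<^sub>2 - \<delta>\<^sub>1"] unfolding s2' unfolding s1_def[symmetric]
      unfolding cond_mutual_info_def Let_def p_def pbc_def pYX_def pX_def .
    have bet: "(\<Sum>b\<in>UNIV. pX M X s1 b * (\<Sum>y\<in>UNIV. (pYX M Y X t s1 y b / pX M X s1 b - train_pYgX (T \<delta>\<^sub>1) b y)\<^sup>2)) \<le> \<beta>\<^sup>2"
      using BE[rule_format, of \<delta>\<^sub>1] unfolding s1_def[symmetric] pYgX_def .
    have "(\<Sum>b\<in>UNIV. pX M X s1 b * exp_loss L (\<lambda>y. pYX M Y X t s1 y b / pX M X s1 b) (act (train_pYgX (T \<delta>\<^sub>1) b)))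
     \<le> (\<Sum>c\<in>UNIV. pX M X s2 c * exp_loss L (\<lambda>y. pYX M Y X t s2 y c / pX M X s2 c) (act (train_pYgX (T \<delta>\<^sub>2) c)))
        + (2 * B + 2 * B * sqrt (real CARD('y))) * max \<epsilon> \<beta>"
      by (rule core[OF Bd bay _ J1 J2 PB m1 m1 tot Q1 Imi bet e0 b0]) (simp add: p_def)
    then show "cond_cross_entropy_L L act (pX M X (t - int \<delta>\<^sub>1)) (pYgX M Y X t (t - int \<delta>\<^sub>1)) (train_pYgX (T \<delta>\<^sub>1))
       \<le> cond_cross_entropy_L L act (pX M X (t - int \<delta>\<^sub>2)) (pYgX M Y X t (t - int \<delta>\<^sub>2)) (train_pYgX (T \<delta>\<^sub>2))
         + (2 * B + 2 * B * sqrt (real CARD('y))) * max \<epsilon> \<beta>"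
      unfolding cond_cross_entropy_L_def pYgX_def s1_def s2_def .
  qed
qed

end
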